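(* For all integers $d\ge1$ and $1\le s\le 2(q-1)$, the following identity holds in $K[t_1,\dots,t_s,z]$: \[ N^{(d+1)}(\chi_1\cdots\chi_s)=\prod_{i=1}^s N^{(d+1)}_i \;-\; [d+1]\,E_{d+1}\sum_{l=q}^{s}(E_d)^{l-q}\sum_{\substack{\alpha\in\{0,1\}^s\\|\alpha|=l}}\ \prod_{i=1}^s \big(N^{(d)}_i\big)^{1-\alpha_i}\big(b^{(d)}_i\big)^{\alpha_i}, \] where all $E_j$ are evaluated at $z$ and the sum over $l$ is empty when $s<q$.
   Context: $A=\mathbb{F}_q[\theta]$, $K=\mathbb{F}_q(\theta)$; $\chi_i:A\to\mathbb{F}_q[t_1,\dots,t_s]$ is the $\mathbb{F}_q$-algebra map with $\theta\mapsto t_i$. $D_j$ is the product of the monic polynomials of degree $j$ in $A$; $A(d)$ is the set of elements of $A$ of degree $<d$ ($A(0)=\{0\}$); $E_d(z)=D_d^{-1}\prod_{a\in A(d)}(z-a)$; $b_d(t)=\prod_{j=0}^{d-1}(t-\theta^{q^j})$; $\ell_d=\prod_{j=1}^{d}(\theta-\theta^{q^j})$; $[d]=\theta^{q^d}-\theta$. For a function $f$ on $A(d)$ with values in $K[t_1,\dots,t_s]$, $N^{(d)}(f)(z)=\sum_{a\in A(d)}f(a)\,\ell_dE_d(z-a)/(z-a)$, the unique polynomial in $z$ of degree $<q^d$ agreeing with $f$ on $A(d)$. Put $N^{(d)}_i=N^{(d)}(\chi_i)$ (which equals $\sum_{j=0}^{d-1}b_j(t_i)E_j(z)$) and $b^{(d)}_i=b_d(t_i)$.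 For $\alpha\in\{0,1\}^s$, $|\alpha|=\alpha_1+\cdots+\alpha_s$. *)

theory Defs
  imports "HOL-Library.FuncSet" "HOL-Computational_Algebra.Polynomial" "HOL-Computational_Algebra.Fraction_Field"
begin

text \<open>F_q is a finite field type 'a with q = card (UNIV :: 'a set); A = 'a poly (variable theta);
  K = 'a poly fract, the fraction field of A.\<close>

type_synonym 'a KK = "'a poly fract"

definition embA :: "'a::{finite,field} poly \<Rightarrow> 'a KK" where
  "embA a = Fract a 1"

definition theta :: "'a::{finite,field} KK" where
  "theta = embA [:0, 1:]"

definition Aset :: "nat \<Rightarrow> 'a::{finite,field} poly set" where
  "Aset d = {a. a = 0 \<or> degree a < d}"

definition Dprod :: "nat \<Rightarrow> 'a::{finite,field} KK" where
  "Dprod j = (\<Prod>p\<in>{p :: 'a poly. lead_coeff p = 1 \<and> degree p = j}. embA p)"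

definition Efun :: "nat \<Rightarrow> 'a::{finite,field} KK \<Rightarrow> 'a KK" where
  "Efun d z = inverse (Dprod d :: 'a KK) * (\<Prod>a\<in>Aset d. z - embA a)"

text \<open>The polynomial E_d(w)/w (exact polynomial quotient, since 0 is in A(d)).\<close>
definition Equot :: "nat \<Rightarrow> 'a::{finite,field} KK \<Rightarrow> 'a KK" where
  "Equot d w = inverse (Dprod d :: 'a KK) * (\<Prod>a\<in>Aset d - {0}. w - embA a)"

definition bfun :: "nat \<Rightarrow> 'a::{finite,field} KK \<Rightarrow> 'a KK" where
  "bfun d t = (\<Prod>j<d. t - theta ^ (card (UNIV :: 'a set) ^ j))"

definition ell :: "nat \<Rightarrow> 'a::{finite,field} KK" where
  "ell d = (\<Prod>j\<in>{1..d}. theta - theta ^ (card (UNIV :: 'a set) ^ j))"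

definition bracket :: "nat \<Rightarrow> 'a::{finite,field} KK" where
  "bracket d = theta ^ (card (UNIV :: 'a set) ^ d) - theta"

text \<open>chi_i(a) evaluated at t_i = t: the F_q-algebra map theta \<mapsto> t.\<close>
definition chi :: "'a::{finite,field} KK \<Rightarrow> 'a poly \<Rightarrow> 'a KK" where
  "chi t a = poly (map_poly (\<lambda>c. embA [:c:]) a) t"

definition Nop :: "nat \<Rightarrow> ('a::{finite,field} poly \<Rightarrow> 'a KK) \<Rightarrow> 'a KK \<Rightarrow> 'a KK" where
  "Nop d f z = (\<Sum>a\<in>Aset d. f a * ell d * Equot d (z - embA a))"

end

theory Submission
  imports Defs "HOL-Computational_Algebra.Primes"
begin

lemma embA_add [simp]: "embA (a + b) = embA a + embA b"
  by (simp add: embA_def)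
lemma embA_mult [simp]: "embA (a * b) = embA a * embA b"
  by (simp add: embA_def)
lemma embA_0 [simp]: "embA 0 = 0"
  by (simp add: embA_def Zero_fract_def)
lemma embA_1 [simp]: "embA 1 = 1"
  by (simp add: embA_def One_fract_def)
lemma embA_minus [simp]: "embA (- a) = - embA a"
  by (simp add: embA_def)
lemma embA_diff [simp]: "embA (a - b) = embA a - embA b"
  by (simp add: embA_def)
lemma embA_eq_iff [simp]: "embA a = embA b \<longleftrightarrow> a = b"
  by (simp add: embA_def eq_fract)
lemma embA_eq_0_iff [simp]: "embA a = 0 \<longleftrightarrow> a = 0"
  using embA_eq_iff[of a 0] by simp
lemma embA_power [simp]: "embA (a ^ n) = embA a ^ n"
  by (induction n) simp_all
lemma embA_sum: "embA (sum f S) = (\<Sum>x\<in>S. embA (f x))"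
  by (induction S rule: infinite_finite_induct) simp_all
lemma embA_prod: "embA (prod f S) = (\<Prod>x\<in>S. embA (f x))"
  by (induction S rule: infinite_finite_induct) simp_all
lemma embA_of_nat [simp]: "embA (of_nat n) = of_nat n"
  by (induction n) simp_all

lemma theta_power: "theta ^ n = embA (monom 1 n)"
  by (simp add: theta_def monom_altdef)

abbreviation ec :: "'a::{finite,field} \<Rightarrow> 'a KK" where "ec c \<equiv> embA [:c:]"

lemma ff_power_card: "(x::'a::{finite,field}) ^ card (UNIV :: 'a set) = x"
proof (cases "x = 0")
  case False
  have "x * (\<Prod>y\<in>UNIV-{0}. x * y) = x * x ^ (card (UNIV :: 'a set) - 1) * \<Prod>(UNIV-{0})"
    by (simp add: prod.distrib mult_ac)
  also have "x * x ^ (card (UNIV :: 'a set) - 1) = x ^ Suc (card (UNIV :: 'a set) - 1)"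
    by (subst power_Suc) auto
  also have "Suc (card (UNIV :: 'a set) - 1) = card (UNIV :: 'a set)"
    using finite_UNIV_card_ge_0[where ?'a = 'a] by simp
  also have "(\<Prod>y\<in>UNIV-{0}. x * y) = (\<Prod>y\<in>UNIV-{0}. y)"
    by (rule prod.reindex_bij_witness[of _ "\<lambda>y. y / x" "\<lambda>y. x * y"]) (use False in auto)
  finally show ?thesis
    by simp
qed (use finite_UNIV_card_ge_0[where ?'a = 'a] in auto)

lemma card_ge2: "card (UNIV :: 'a::{finite,field} set) \<ge> 2"
proof -
  have "{0,1} \<subseteq> (UNIV :: 'a set)" by simp
  hence "card {0::'a,1} \<le> card (UNIV :: 'a set)" by (intro card_mono) auto
  thus ?thesis by simp
qed

lemma CHAR_prime_ff: "prime CHAR('a::{finite,field})"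
  using prime_CHAR_semidom[where ?'a = 'a] finite_imp_CHAR_pos[where ?'a = 'a] by auto

lemma scal_closed:
  fixes V :: "'a::{finite,field} set"
  assumes "0 \<in> V" "\<And>x y. x \<in> V \<Longrightarrow> y \<in> V \<Longrightarrow> x + y \<in> V" "v \<in> V"
  shows "of_nat n * v \<in> V"
  by (induction n) (use assms in \<open>auto simp: distrib_right\<close>)

lemma card_char_power: "\<exists>n. card (UNIV::'a::{finite,field} set) = CHAR('a) ^ n"
proof -
  define p where "p = CHAR('a)"
  have pp: "prime p" unfolding p_def by (rule CHAR_prime_ff)
  hence p2: "p \<ge> 2" by (simp add: prime_ge_2_nat)
  have ofp: "of_nat p = (0::'a)" unfolding p_def by simp
  have ofmod: "of_nat (n mod p) = (of_nat n :: 'a)" for n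
  proof -
    have "(of_nat n :: 'a) = of_nat (n mod p + p * (n div p))" by simp
    also have "\<dots> = of_nat (n mod p)" by (simp only: of_nat_add of_nat_mult ofp) simp
    finally show ?thesis by simp
  qed
  have main: "\<exists>V::'a set. 0 \<in> V \<and> (\<forall>x\<in>V. \<forall>y\<in>V. x + y \<in> V) \<and> (\<exists>m. card V = p ^ m) \<and>
      (V = UNIV \<or> k \<le> card V)" for k
  proof (induction k)
    case 0
    show ?case by (intro exI[of _ "{0}"]) (auto intro: exI[of _ 0])
  next
    case (Suc k)
    then obtain V :: "'a set" where V0: "0 \<in> V" and Vadd: "\<forall>x\<in>V. \<forall>y\<in>V. x + y \<in> V"
      and Vm: "\<exists>m. card V = p ^ m" and Vk: "V = UNIV \<or> k \<le> card V" by blast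
    show ?case
    proof (cases "V = UNIV")
      case True thus ?thesis using V0 Vadd Vm by blast
    next
      case False
      then obtain x where x: "x \<notin> V" by blast
      have sc: "of_nat n * v \<in> V" if "v \<in> V" for n v
        using scal_closed[of V v n] V0 Vadd that by blast
      have neg: "- v \<in> V" if "v \<in> V" for v
      proof -
        have "of_nat (p - 1) * v \<in> V" using sc that by blast
        moreover have "of_nat (p - 1) * v = - v"
        proof -
          have "of_nat (p - 1) * v + v = of_nat p * v"
            using p2 by (simp add: distrib_right of_nat_diff algebra_simps)
          thus ?thesis using ofp by (simp add: eq_neg_iff_add_eq_0)
        qed
        ultimately show ?thesis by simp
      qed
      define W where "W = (\<lambda>(v, i). v + of_nat i * x) ` (V \<times> {..<p})"
      have inj: "inj_on (\<lambda>(v, i). v + of_nat i * x) (V \<times> {..<p})"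
      proof (rule inj_onI, clarify)
        fix v i v' j assume vi: "v \<in> V" "i < p" "v' \<in> V" "j < p"
          and eq: "v + of_nat i * x = v' + of_nat j * x"
        have ij: "i = j"
        proof (rule ccontr)
          assume "i \<noteq> j"
          have gen: "False" if "a < p" "b < p" "a > b" "w \<in> V" "w' \<in> V"
              "w + of_nat a * x = w' + of_nat b * x" for a b w w'
          proof -
            define dd where "dd = a - b"
            have dd: "dd > 0" "dd < p" using that(1,3) by (auto simp: dd_def)
            have "of_nat dd * x = w' - w"
              using that(6) that(3) by (simp add: dd_def of_nat_diff algebra_simps)
            moreover have "- w \<in> V" using neg that(4) by blast
            hence "w' + - w \<in> V" using Vadd that(5) by blast
            ultimately have dV: "of_nat dd * x \<in> V" by simp
            have "\<not> p dvd dd" using dd by (simp add: nat_dvd_not_less)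
            hence "coprime p dd" by (rule prime_imp_coprime[OF pp])
            hence g: "gcd dd p = 1" by (simp add: coprime_commute)
            obtain e y where "dd * e = p * y + gcd dd p"
              using bezout_nat[of dd p] dd by blast
            hence "dd * e = p * y + 1" using g by simp
            hence "(of_nat (dd * e) :: 'a) = 1" using ofp by (simp only: of_nat_add of_nat_mult) simp
            hence "x = of_nat e * (of_nat dd * x)" by (simp add: mult_ac)
            thus False using sc[OF dV, of e] x by metis
          qed
          show False
            using \<open>i \<noteq> j\<close> gen[of i j v v'] gen[of j i v' v] vi eq by (cases "i < j") auto
        qed
        with eq show "v = v' \<and> i = j" by simp
      qed
      have cardW: "card W = card V * p"
        unfolding W_def by (subst card_image[OF inj]) (simp add: card_cartesian_product)
      show ?thesis
      proof (intro exI[of _ W] conjI)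
        show "0 \<in> W" unfolding W_def using V0 pp by (auto intro!: image_eqI[of _ _ "(0,0)"] prime_gt_0_nat)
        show "\<forall>a\<in>W. \<forall>b\<in>W. a + b \<in> W"
        proof (clarify)
          fix a b assume "a \<in> W" "b \<in> W"
          then obtain v i v' j where "v \<in> V" "i < p" "v' \<in> V" "j < p"
            "a = v + of_nat i * x" "b = v' + of_nat j * x" unfolding W_def by auto
          hence "a + b = (v + v') + of_nat ((i + j) mod p) * x"
            by (simp add: ofmod algebra_simps)
          moreover have "(i + j) mod p < p" using p2 by simp
          ultimately show "a + b \<in> W" unfolding W_def using Vadd \<open>v\<in>V\<close> \<open>v'\<in>V\<close>
            by (auto intro!: image_eqI[of _ _ "(v + v', (i+j) mod p)"])
        qed
        show "\<exists>m. card W = p ^ m"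
        proof -
          obtain m where "card V = p ^ m" using Vm by blast
          hence "card W = p ^ Suc m" using cardW by (simp add: mult.commute)
          thus ?thesis by blast
        qed
        have "card V > 0" using V0 by (subst card_gt_0_iff) auto
        hence "card V \<ge> 1" by simp
        moreover have "card V * 2 \<le> card V * p" using p2 by simp
        ultimately have "Suc k \<le> card W" using Vk False cardW by linarith
        thus "W = UNIV \<or> Suc k \<le> card W" by blast
      qed
    qed
  qed
  obtain V :: "'a set" where "\<exists>m. card V = p ^ m" "V = UNIV \<or> Suc (card (UNIV :: 'a set)) \<le> card V"
    using main[of "Suc (card (UNIV :: 'a set))"] by blast
  moreover have "card V \<le> card (UNIV :: 'a set)" by (rule card_mono) auto
  ultimately show ?thesis unfolding p_def by auto
qed

lemma CHAR_KK: "CHAR('a::{finite,field} KK) = CHAR('a)"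
proof (rule CHAR_eqI)
  have "(of_nat CHAR('a) :: 'a KK) = embA (of_nat CHAR('a))" by simp
  also have "(of_nat CHAR('a) :: 'a poly) = [:of_nat CHAR('a):]" by (rule of_nat_poly)
  finally show "(of_nat CHAR('a) :: 'a KK) = 0" by simp
next
  fix x assume a: "(of_nat x :: 'a KK) = 0"
  have "(of_nat x :: 'a KK) = ec (of_nat x)"
    by (metis embA_of_nat of_nat_poly)
  with a have "[:(of_nat x :: 'a):] = 0" by simp
  hence "(of_nat x :: 'a) = 0" by simp
  thus "CHAR('a) dvd x" by (simp add: of_nat_eq_0_iff_char_dvd)
qed

lemma prime_CHAR_KK: "prime CHAR('a::{finite,field} KK)"
  using CHAR_KK CHAR_prime_ff by metis

lemma frob_add: "(x + y :: 'a::{finite,field} KK) ^ (card (UNIV :: 'a set) ^ n) = x ^ (card (UNIV :: 'a set) ^ n) + y ^ (card (UNIV :: 'a set) ^ n)"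
proof -
  obtain k where k: "card (UNIV :: 'a set) = CHAR('a) ^ k" using card_char_power by blast
  show ?thesis
    by (rule freshmans_dream'[OF prime_CHAR_KK]) (simp add: k CHAR_KK power_mult[symmetric])
qed

lemma frob_add1: "(x + y :: 'a::{finite,field} KK) ^ card (UNIV :: 'a set) = x ^ card (UNIV :: 'a set) + y ^ card (UNIV :: 'a set)"
  using frob_add[of x y 1] by simp

lemma frob_zero: "(0 :: 'a::{finite,field} KK) ^ (card (UNIV :: 'a set) ^ n) = 0"
  using card_ge2[where 'a='a] by simp

lemma frob_neg: "(- x :: 'a::{finite,field} KK) ^ (card (UNIV :: 'a set) ^ n) = - (x ^ (card (UNIV :: 'a set) ^ n))"
proof -
  have "(- x + x) ^ (card (UNIV :: 'a set) ^ n) = 0" using frob_zero by simp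
  thus ?thesis unfolding frob_add by (simp add: add_eq_0_iff2)
qed

lemma frob_diff: "(x - y :: 'a::{finite,field} KK) ^ (card (UNIV :: 'a set) ^ n) = x ^ (card (UNIV :: 'a set) ^ n) - y ^ (card (UNIV :: 'a set) ^ n)"
  using frob_add[of x "-y" n] frob_neg[of y n] by simp

lemma frob_sum: "(sum f S :: 'a::{finite,field} KK) ^ (card (UNIV :: 'a set) ^ n) = (\<Sum>i\<in>S. f i ^ (card (UNIV :: 'a set) ^ n))"
  by (induction S rule: infinite_finite_induct) (simp_all add: frob_zero frob_add)

lemma frob_add1': "(x - y :: 'a::{finite,field} KK) ^ card (UNIV :: 'a set) = x ^ card (UNIV :: 'a set) - y ^ card (UNIV :: 'a set)"
  using frob_diff[of x y 1] by simp

lemma ec_power_q: "ec (c::'a::{finite,field}) ^ (card (UNIV :: 'a set) ^ n) = ec c"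
proof (induction n)
  case (Suc n)
  have "ec c ^ (card (UNIV :: 'a set) ^ Suc n) = (ec c ^ (card (UNIV :: 'a set) ^ n)) ^ card (UNIV :: 'a set)"
    by (simp add: power_mult[symmetric] mult.commute)
  also have "\<dots> = ec c ^ card (UNIV :: 'a set)" using Suc by simp
  also have "\<dots> = ec (c ^ card (UNIV :: 'a set))" by (simp flip: embA_power add: poly_const_pow)
  also have "\<dots> = ec c" by (simp add: ff_power_card)
  finally show ?case .
qed simp

lemma Aset_coeff: "a \<in> Aset d \<longleftrightarrow> (\<forall>i\<ge>d. coeff a i = 0)"
proof
  assume "a \<in> Aset d"
  thus "\<forall>i\<ge>d. coeff a i = 0" unfolding Aset_def by (auto intro: coeff_eq_0)
next
  assume h: "\<forall>i\<ge>d. coeff a i = 0"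
  show "a \<in> Aset d"
  proof (cases "a = 0")
    case False
    hence "coeff a (degree a) \<noteq> 0" by simp
    hence "degree a < d" using h by (meson not_le)
    thus ?thesis unfolding Aset_def by simp
  qed (simp add: Aset_def)
qed

lemma Aset_0 [simp]: "0 \<in> Aset d" by (simp add: Aset_def)
lemma Aset_add: "a \<in> Aset d \<Longrightarrow> b \<in> Aset d \<Longrightarrow> a + b \<in> Aset d"
  by (simp add: Aset_coeff)
lemma Aset_minus: "a \<in> Aset d \<Longrightarrow> - a \<in> Aset d"
  by (simp add: Aset_coeff)
lemma Aset_diff: "a \<in> Aset d \<Longrightarrow> b \<in> Aset d \<Longrightarrow> a - b \<in> Aset d"
  by (simp add: Aset_coeff)
lemma Aset_smult: "a \<in> Aset d \<Longrightarrow> smult c a \<in> Aset d"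
  by (simp add: Aset_coeff)
lemma Aset_mono: "d \<le> e \<Longrightarrow> a \<in> Aset d \<Longrightarrow> a \<in> Aset e"
  by (simp add: Aset_coeff)
lemma Aset_monom: "k < d \<Longrightarrow> monom c k \<in> Aset d"
  by (simp add: Aset_coeff coeff_monom)
lemma Aset_zero_eq: "Aset 0 = {0::'a::{finite,field} poly}"
  by (auto simp: Aset_def)

lemma Aset_Suc: "Aset (Suc d) = (\<lambda>(c, b). monom c d + b) ` (UNIV \<times> Aset d)"
proof (intro equalityI subsetI)
  fix a :: "'a poly" assume a: "a \<in> Aset (Suc d)"
  define b where "b = a - monom (coeff a d) d"
  have "b \<in> Aset d" using a unfolding b_def Aset_coeff
    by (auto simp: coeff_monom)
  moreover have "a = monom (coeff a d) d + b" unfolding b_def by simp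
  ultimately show "a \<in> (\<lambda>(c, b). monom c d + b) ` (UNIV \<times> Aset d)"
    by (intro image_eqI[of _ _ "(coeff a d, b)"]) auto
next
  fix a :: "'a poly" assume "a \<in> (\<lambda>(c, b). monom c d + b) ` (UNIV \<times> Aset d)"
  then obtain c b where "b \<in> Aset d" "a = monom c d + b" by auto
  thus "a \<in> Aset (Suc d)" by (simp add: Aset_coeff coeff_monom)
qed

lemma Aset_Suc_inj: "inj_on (\<lambda>(c, b). monom c d + b) (UNIV \<times> Aset d)"
proof (rule inj_onI, clarify)
  fix c b c' b' assume h: "b \<in> Aset d" "b' \<in> Aset d" "monom c d + b = monom c' d + b'"
  have "coeff (monom c d + b) d = coeff (monom c' d + b') d" using h(3) by simp
  hence "c = c'" using h(1,2) by (simp add: Aset_coeff)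
  with h(3) show "c = c' \<and> b = b'" by simp
qed

lemma finite_Aset [simp]: "finite (Aset d :: 'a::{finite,field} poly set)"
  by (induction d) (simp_all add: Aset_zero_eq Aset_Suc)

lemma card_Aset: "card (Aset d :: 'a::{finite,field} poly set) = card (UNIV :: 'a set) ^ d"
proof (induction d)
  case 0 thus ?case by (simp add: Aset_zero_eq)
next
  case (Suc d)
  show ?case unfolding Aset_Suc
    by (subst card_image[OF Aset_Suc_inj]) (simp add: card_cartesian_product Suc)
qed

lemma card_embA_Aset: "card (embA ` Aset d :: 'a::{finite,field} KK set) = card (UNIV :: 'a set) ^ d"
  by (subst card_image) (auto simp: inj_on_def card_Aset)

lemma monic_set: "{p :: 'a::{finite,field} poly. lead_coeff p = 1 \<and> degree p = d} = (\<lambda>a. monom 1 d - a) ` Aset d"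
proof (intro equalityI subsetI)
  fix p :: "'a poly" assume "p \<in> {p. lead_coeff p = 1 \<and> degree p = d}"
  hence p: "lead_coeff p = 1" "degree p = d" by auto
  have "monom 1 d - p \<in> Aset d" unfolding Aset_coeff
  proof (intro allI impI)
    fix i assume "d \<le> i"
    thus "coeff (monom 1 d - p) i = 0" using p
      by (cases "i = d") (auto simp: coeff_monom intro: coeff_eq_0)
  qed
  moreover have "p = monom 1 d - (monom 1 d - p)" by simp
  ultimately show "p \<in> (\<lambda>a. monom 1 d - a) ` Aset d" by blast
next
  fix p :: "'a poly" assume "p \<in> (\<lambda>a. monom 1 d - a) ` Aset d"
  then obtain a where a: "a \<in> Aset d" "p = monom 1 d - a" by auto
  have c: "coeff p d = 1" using a by (simp add: Aset_coeff)
  have "\<forall>i>d. coeff p i = 0" using a by (simp add: Aset_coeff coeff_monom)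
  hence "degree p \<le> d" by (meson degree_le)
  moreover have "degree p \<ge> d" using c by (metis le_degree one_neq_zero)
  ultimately have "degree p = d" by simp
  thus "p \<in> {p. lead_coeff p = 1 \<and> degree p = d}" using c by simp
qed

lemma Dprod_eq: "Dprod d = (\<Prod>a\<in>Aset d. theta ^ d - embA a :: 'a::{finite,field} KK)"
proof -
  have "Dprod d = (\<Prod>p\<in>(\<lambda>a. monom 1 d - a) ` Aset d. embA p :: 'a KK)"
    unfolding Dprod_def monic_set ..
  also have "\<dots> = (\<Prod>a\<in>Aset d. embA (monom 1 d - a))"
    by (subst prod.reindex) (auto simp: inj_on_def)
  finally show ?thesis by (simp add: theta_power)
qed

lemma monom_notin: "monom (1::'a::{finite,field}) d \<notin> Aset d"
proof
  assume h: "monom 1 d \<in> Aset d"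
  have "coeff (monom (1::'a) d) d = 0" using h[unfolded Aset_coeff, rule_format, of d] by simp
  thus False by simp
qed

lemma Dprod_nonzero: "Dprod d \<noteq> (0 :: 'a::{finite,field} KK)"
proof -
  have "theta ^ d - embA a \<noteq> (0::'a KK)" if "a \<in> Aset d" for a
  proof
    assume "theta ^ d - embA a = (0::'a KK)"
    hence "monom 1 d = a" by (simp add: theta_power)
    thus False using that monom_notin[where 'a='a, of d] by simp
  qed
  thus ?thesis unfolding Dprod_eq by (subst prod_zero_iff) auto
qed

lemma theta_pow_eq_iff: "theta ^ m = (theta ^ n :: 'a::{finite,field} KK) \<longleftrightarrow> m = n"
  by (auto simp: theta_power monom_eq_iff')

definition pf :: "nat \<Rightarrow> ('b::field \<Rightarrow> 'b) \<Rightarrow> bool" where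
  "pf n f \<longleftrightarrow> (\<exists>p. degree p \<le> n \<and> (\<forall>x. f x = poly p x))"

lemma pf_const: "pf n (\<lambda>x. c)"
  unfolding pf_def by (intro exI[of _ "[:c:]"]) simp

lemma pf_id: "pf 1 (\<lambda>x. x)"
  unfolding pf_def by (intro exI[of _ "[:0,1:]"]) simp

lemma pf_mono: "pf m f \<Longrightarrow> m \<le> n \<Longrightarrow> pf n f"
  unfolding pf_def by (meson order_trans)

lemma pf_add: "pf n f \<Longrightarrow> pf n g \<Longrightarrow> pf n (\<lambda>x. f x + g x)"
  unfolding pf_def
  by (elim exE conjE, rule_tac x="p + pa" in exI) (auto intro: order_trans[OF degree_add_le_max])

lemma pf_neg: "pf n f \<Longrightarrow> pf n (\<lambda>x. - f x)"
  unfolding pf_def by (elim exE conjE, rule_tac x="- p" in exI) auto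

lemma pf_diff: "pf n f \<Longrightarrow> pf n g \<Longrightarrow> pf n (\<lambda>x. f x - g x)"
  using pf_add[of n f "\<lambda>x. - g x"] pf_neg[of n g] by simp

lemma pf_mult: "pf m f \<Longrightarrow> pf n g \<Longrightarrow> pf (m + n) (\<lambda>x. f x * g x)"
  unfolding pf_def
  by (elim exE conjE, rule_tac x="p * pa" in exI) (auto intro: order_trans[OF degree_mult_le])

lemma pf_cmult: "pf n f \<Longrightarrow> pf n (\<lambda>x. c * f x)"
  using pf_mult[OF pf_const[of 0 c], of n f] by simp

lemma pf_sum: "finite S \<Longrightarrow> (\<And>i. i \<in> S \<Longrightarrow> pf n (f i)) \<Longrightarrow> pf n (\<lambda>x. \<Sum>i\<in>S. f i x)"
proof (induction S rule: finite_induct)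
  case empty thus ?case using pf_const[of n 0] by simp
next
  case (insert a S)
  thus ?case using pf_add[of n "f a" "\<lambda>x. \<Sum>i\<in>S. f i x"] by simp
qed

lemma pf_prod: "finite S \<Longrightarrow> (\<And>i. i \<in> S \<Longrightarrow> pf (g i) (f i)) \<Longrightarrow> pf (\<Sum>i\<in>S. g i) (\<lambda>x. \<Prod>i\<in>S. f i x)"
proof (induction S rule: finite_induct)
  case empty thus ?case using pf_const[of 0 1] by simp
next
  case (insert a S)
  thus ?case using pf_mult[of "g a" "f a" "\<Sum>i\<in>S. g i" "\<lambda>x. \<Prod>i\<in>S. f i x"] by simp
qed

lemma pf_power: "pf n f \<Longrightarrow> pf (k * n) (\<lambda>x. f x ^ k)"
proof (induction k)
  case 0 thus ?case using pf_const[of 0 1] by simp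
next
  case (Suc k)
  thus ?case using pf_mult[of n f "k * n" "\<lambda>x. f x ^ k"] by simp
qed

lemma pf_lin: "pf 1 (\<lambda>x. x - c)"
  using pf_diff[OF pf_id pf_const] .

lemma pf_eq:
  assumes "pf n f" "pf n g" "finite S" "n < card S" "\<And>x. x \<in> S \<Longrightarrow> f x = g x"
  shows "f x = g x"
proof -
  obtain p where p: "degree p \<le> n" "\<And>x. f x = poly p x" using assms(1) unfolding pf_def by blast
  obtain q where q: "degree q \<le> n" "\<And>x. g x = poly q x" using assms(2) unfolding pf_def by blast
  have "p = q"
    by (rule poly_eqI_degree[of S]) (use assms p q in auto)
  thus ?thesis using p q by simp
qed

lemma prod_lin_UNIV:
  "(\<Prod>c\<in>(UNIV :: 'a::{finite,field} set). Y - ec c) = Y ^ card (UNIV :: 'a set) - Y"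
proof -
  let ?q = "card (UNIV :: 'a set)"
  define P :: "'a KK poly" where "P = (\<Prod>c\<in>UNIV. [:- ec c, 1:])"
  define Q :: "'a KK poly" where "Q = monom 1 ?q - [:0, 1:]"
  have q2: "?q \<ge> 2" by (rule card_ge2)
  have degP: "degree P = ?q" unfolding P_def
    by (subst degree_prod_eq_sum_degree) auto
  have "coeff P ?q = lead_coeff P" using degP by simp
  also have "\<dots> = 1" unfolding P_def lead_coeff_prod by simp
  finally have lcP: "coeff P ?q = 1" .
  have degQ: "degree Q \<le> ?q" unfolding Q_def
    by (rule order_trans[OF degree_diff_le_max]) (use q2 in \<open>auto simp: degree_monom_le\<close>)
  obtain k where k: "?q = Suc (Suc k)" using q2 by (metis add_2_eq_Suc le_Suc_ex)
  have lcQ: "coeff Q ?q = 1" unfolding Q_def by (simp only: k coeff_diff coeff_monom) simp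
  have "P = Q"
  proof (rule poly_eqI_degree_lead_coeff[of P ?q Q "ec ` UNIV"])
    show "coeff P ?q = coeff Q ?q" using lcP lcQ by simp
    show "?q \<le> card (ec ` (UNIV :: 'a set))" by (subst card_image) (auto simp: inj_on_def)
    show "degree P \<le> ?q" using degP by simp
    show "degree Q \<le> ?q" by fact
    fix z assume "z \<in> ec ` (UNIV :: 'a set)"
    then obtain c where c: "z = ec c" by auto
    have "poly P z = 0" unfolding P_def poly_prod using c by (subst prod_zero_iff) auto
    moreover have "poly Q z = 0" unfolding Q_def using c ec_power_q[of c 1] by (simp add: poly_monom)
    ultimately show "poly P z = poly Q z" by simp
  qed
  hence "poly P Y = poly Q Y" by simp
  thus ?thesis unfolding P_def Q_def by (simp add: poly_prod poly_monom)
qed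

definition ee :: "nat \<Rightarrow> 'a::{finite,field} KK \<Rightarrow> 'a KK" where
  "ee d x = (\<Prod>a\<in>Aset d. x - embA a)"

lemma Efun_ee: "Efun d x = inverse (Dprod d) * ee d x"
  by (simp add: Efun_def ee_def)

lemma ee_0: "ee 0 x = x"
  by (simp add: ee_def Aset_zero_eq)

lemma embA_monom: "embA (monom c d) = ec c * theta ^ d"
proof -
  have e: "monom c d = [:c:] * monom 1 d" by (simp add: smult_monom)
  show ?thesis by (subst e, subst embA_mult) (simp add: theta_power)
qed

lemma ee_Suc_prod: "ee (Suc d) x = (\<Prod>c\<in>UNIV. ee d (x - ec c * theta ^ d))"
proof -
  have "ee (Suc d) x = (\<Prod>p\<in>(\<lambda>(c, b). monom c d + b) ` (UNIV \<times> Aset d). x - embA p)"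
    unfolding ee_def Aset_Suc ..
  also have "\<dots> = (\<Prod>(c, b)\<in>UNIV \<times> Aset d. x - embA (monom c d + b))"
    by (subst prod.reindex[OF Aset_Suc_inj]) (simp add: case_prod_unfold)
  also have "\<dots> = (\<Prod>c\<in>UNIV. \<Prod>b\<in>Aset d. x - embA (monom c d + b))"
    by (subst prod.cartesian_product[symmetric]) simp
  also have "\<dots> = (\<Prod>c\<in>UNIV. ee d (x - ec c * theta ^ d))"
    unfolding ee_def by (intro prod.cong refl) (simp add: embA_monom algebra_simps)
  finally show ?thesis .
qed

lemma ee_D: "ee d (theta ^ d) = Dprod d"
  by (simp add: ee_def Dprod_eq)

lemma ee_vanish: "a \<in> Aset d \<Longrightarrow> ee d (embA a) = 0"
  unfolding ee_def by (subst prod_zero_iff) auto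

lemma prod_lin_scaled:
  "(\<Prod>c\<in>(UNIV :: 'a::{finite,field} set). Y - ec c * D) = Y ^ card (UNIV :: 'a set) - D ^ (card (UNIV :: 'a set) - 1) * Y"
proof (cases "D = 0")
  case True
  have "card (UNIV :: 'a set) - 1 \<noteq> 0" using card_ge2[where 'a='a] by simp
  thus ?thesis using True by simp
next
  case False
  let ?q = "card (UNIV :: 'a set)"
  have "(\<Prod>c\<in>(UNIV :: 'a set). Y - ec c * D) = (\<Prod>c\<in>(UNIV :: 'a set). D * (Y / D - ec c))"
    using False by (intro prod.cong refl) (simp add: field_simps)
  also have "\<dots> = D ^ ?q * (\<Prod>c\<in>(UNIV :: 'a set). Y / D - ec c)"
    by (simp add: prod.distrib)
  also have "\<dots> = D ^ ?q * ((Y / D) ^ ?q - Y / D)" by (simp add: prod_lin_UNIV)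
  also have "\<dots> = Y ^ ?q - D ^ ?q * (Y / D)" using False by (simp add: algebra_simps power_divide)
  also have "D ^ ?q = D ^ (?q - 1) * D" using card_ge2[where 'a='a]
    by (metis One_nat_def Suc_le_D le_trans one_le_numeral power_Suc2 diff_Suc_1)
  finally show ?thesis using False by simp
qed

lemma ee_lin: "(\<forall>x y::'a::{finite,field} KK. ee d (x + y) = ee d x + ee d y) \<and> (\<forall>(c::'a) (x::'a KK). ee d (ec c * x) = ec c * ee d x)"
proof (induction d)
  case 0 thus ?case by (simp add: ee_0)
next
  case (Suc d)
  let ?q = "card (UNIV :: 'a set)"
  have add: "ee d (x + y) = ee d x + ee d y" for x y :: "'a KK" using Suc by blast
  have hom: "ee d (ec c * x) = ec c * ee d x" for c :: 'a and x :: "'a KK" using Suc[THEN conjunct2, rule_format] .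
  have z: "ee d 0 = (0::'a KK)" using ee_vanish[of 0 d] by simp
  have neg: "ee d (- x) = - ee d x" for x :: "'a KK" using add[of x "-x"] z by (metis neg_eq_iff_add_eq_0 add.right_inverse)
  have rec: "ee (Suc d) x = ee d x ^ ?q - Dprod d ^ (?q - 1) * ee d x" for x :: "'a KK"
  proof -
    have "ee (Suc d) x = (\<Prod>c\<in>UNIV. ee d x - ec c * Dprod d)"
      unfolding ee_Suc_prod
    proof (intro prod.cong refl)
      fix c :: 'a
      have "ee d (x - ec c * theta ^ d) = ee d (x + - (ec c * theta ^ d))" by simp
      also have "\<dots> = ee d x + - ee d (ec c * theta ^ d)" by (simp only: add neg)
      also have "\<dots> = ee d x - ec c * Dprod d" by (simp only: hom ee_D) simp
      finally show "ee d (x - ec c * theta ^ d) = ee d x - ec c * Dprod d" .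
    qed
    thus ?thesis by (simp add: prod_lin_scaled)
  qed
  have "ee (Suc d) (x + y) = ee (Suc d) x + ee (Suc d) y" for x y :: "'a KK"
    unfolding rec add frob_add1 by (simp add: algebra_simps)
  moreover have "ee (Suc d) (ec c * x) = ec c * ee (Suc d) x" for c :: 'a and x :: "'a KK"
  proof -
    have "(ec c * ee d x) ^ ?q = ec c * ee d x ^ ?q"
      using ec_power_q[of c 1] by (simp add: power_mult_distrib)
    thus ?thesis unfolding rec hom by (simp add: algebra_simps)
  qed
  ultimately show ?case by blast
qed

lemma ee_add: "ee d (x + y) = ee d x + ee d y" using ee_lin by blast
lemma ee_hom: "ee d (ec c * x) = ec c * ee d x" using ee_lin by blast
lemma ee_zero: "ee d 0 = 0" using ee_vanish[of 0 d] by simp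
lemma ee_neg: "ee d (- x) = - ee d x"
proof -
  have "ee d x + ee d (-x) = 0" using ee_add[of d x "-x"] by (simp add: ee_zero)
  hence "- ee d x = ee d (-x)" by (subst neg_eq_iff_add_eq_0)
  thus ?thesis by simp
qed
lemma ee_diff: "ee d (x - y) = ee d x - ee d y"
  using ee_add[of d x "-y"] ee_neg[of d y] by simp

lemma ee_rec: "ee (Suc d) x = ee d x ^ card (UNIV :: 'a set) - Dprod d ^ (card (UNIV :: 'a set) - 1) * ee d (x :: 'a::{finite,field} KK)"
proof -
  have "ee (Suc d) x = (\<Prod>c\<in>UNIV. ee d x - ec c * Dprod d)"
    unfolding ee_Suc_prod by (intro prod.cong refl) (simp only: ee_diff ee_hom ee_D)
  thus ?thesis by (simp add: prod_lin_scaled)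
qed

lemma Dprod_0: "Dprod 0 = (1 :: 'a::{finite,field} KK)"
  by (simp add: Dprod_eq Aset_zero_eq)

lemma Efun_0: "Efun 0 x = (x :: 'a::{finite,field} KK)"
  by (simp add: Efun_ee Dprod_0 ee_0)

lemma Efun_theta: "Efun d (theta ^ d) = (1 :: 'a::{finite,field} KK)"
  by (simp add: Efun_ee ee_D Dprod_nonzero)

lemma Efun_vanish: "a \<in> Aset d \<Longrightarrow> Efun d (embA a) = (0 :: 'a::{finite,field} KK)"
  by (simp add: Efun_ee ee_vanish)

lemma Efun_theta_Suc: "Efun (Suc d) (theta ^ d) = (0 :: 'a::{finite,field} KK)"
  using Efun_vanish[of "monom 1 d" "Suc d"] by (simp add: theta_power Aset_monom)

lemma Efun_add: "Efun d (x + y) = Efun d x + Efun d (y :: 'a::{finite,field} KK)"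
  by (simp add: Efun_ee ee_add algebra_simps)

lemma Efun_hom: "Efun d (ec c * x) = ec c * Efun d (x :: 'a::{finite,field} KK)"
  by (simp add: Efun_ee ee_hom mult.left_commute)

lemma Efun_neg: "Efun d (- x) = - Efun d (x :: 'a::{finite,field} KK)"
  by (simp add: Efun_ee ee_neg)

lemma Efun_diff: "Efun d (x - y) = Efun d x - Efun d (y :: 'a::{finite,field} KK)"
  by (simp add: Efun_ee ee_diff algebra_simps)

definition rho :: "nat \<Rightarrow> 'a::{finite,field} KK" where
  "rho d = Dprod (Suc d) / Dprod d ^ card (UNIV :: 'a set)"

lemma Efun_rec0: "Efun d x ^ card (UNIV :: 'a set) - Efun d x = rho d * Efun (Suc d) (x :: 'a::{finite,field} KK)"
proof -
  let ?q = "card (UNIV :: 'a set)"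
  let ?D = "Dprod d :: 'a KK"
  have D: "?D \<noteq> 0" by (rule Dprod_nonzero)
  have q1: "?D ^ ?q = ?D ^ (?q - 1) * ?D" using card_ge2[where 'a='a]
    by (metis Suc_diff_1 less_le_trans pos2 power_Suc2)
  have "rho d * Efun (Suc d) x = ee (Suc d) x / ?D ^ ?q"
    unfolding rho_def Efun_ee using Dprod_nonzero[of "Suc d", where 'a='a] by (simp add: field_simps)
  also have "\<dots> = (ee d x ^ ?q - ?D ^ (?q - 1) * ee d x) / ?D ^ ?q" by (simp add: ee_rec)
  also have "\<dots> = (ee d x / ?D) ^ ?q - ee d x / ?D"
    using D by (simp add: q1 field_simps power_divide)
  also have "\<dots> = Efun d x ^ ?q - Efun d x" by (simp add: Efun_ee field_simps)
  finally show ?thesis by simp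
qed

lemma bracket_nonzero: "d \<ge> 1 \<Longrightarrow> bracket d \<noteq> (0 :: 'a::{finite,field} KK)"
proof
  assume d: "d \<ge> 1" and "bracket d = (0 :: 'a KK)"
  hence "theta ^ (card (UNIV :: 'a set) ^ d) = (theta ^ 1 :: 'a KK)" by (simp add: bracket_def)
  hence "card (UNIV :: 'a set) ^ d = 1" by (simp only: theta_pow_eq_iff)
  thus False using card_ge2[where 'a='a] d by simp
qed

lemma bracket_step: "bracket (Suc 0) + bracket (Suc k) ^ card (UNIV :: 'a set) = (bracket (Suc (Suc k)) :: 'a::{finite,field} KK)"
proof -
  let ?q = "card (UNIV :: 'a set)"
  have "bracket (Suc k) ^ ?q = (theta ^ (?q ^ Suc k)) ^ ?q - (theta :: 'a KK) ^ ?q"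
    unfolding bracket_def using frob_diff[of "theta ^ (?q ^ Suc k)" theta 1] by simp
  also have "(theta ^ (?q ^ Suc k)) ^ ?q = (theta :: 'a KK) ^ (?q ^ Suc (Suc k))"
    by (simp add: power_mult[symmetric] mult.commute)
  finally show ?thesis unfolding bracket_def by simp
qed

lemma rho_eq: "rho k = (bracket (Suc k) :: 'a::{finite,field} KK) \<and>
  (\<forall>x :: 'a KK. Efun (Suc k) (theta * x) = theta * Efun (Suc k) x + Efun k x ^ card (UNIV :: 'a set))"
proof (induction k)
  let ?q = "card (UNIV :: 'a set)"
  case 0
  have ee1: "ee (Suc 0) x = x ^ ?q - x" for x :: "'a KK"
    using ee_rec[of 0 x] by (simp add: ee_0 Dprod_0)
  have "(Dprod (Suc 0) :: 'a KK) = ee (Suc 0) (theta ^ Suc 0)" by (rule ee_D[symmetric])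
  also have "\<dots> = theta ^ ?q - theta" using ee1[of theta] by simp
  finally have D1: "Dprod (Suc 0) = (bracket (Suc 0) :: 'a KK)" unfolding bracket_def by simp
  have r: "rho 0 = (bracket (Suc 0) :: 'a KK)" unfolding rho_def by (simp add: Dprod_0 D1)
  have b1: "bracket (Suc 0) \<noteq> (0 :: 'a KK)" by (rule bracket_nonzero) simp
  have "Efun (Suc 0) (theta * x) = theta * Efun (Suc 0) x + Efun 0 x ^ ?q" for x :: "'a KK"
    using b1 by (simp add: Efun_ee D1 ee1 Dprod_0 ee_0 field_simps power_mult_distrib) (simp add: bracket_def algebra_simps)
  thus ?case using r by simp
next
  let ?q = "card (UNIV :: 'a set)"
  case (Suc k)
  have rk: "rho k = (bracket (Suc k) :: 'a KK)" using Suc by blast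
  have Tk: "Efun (Suc k) (theta * x) = theta * Efun (Suc k) x + Efun k x ^ ?q" for x :: "'a KK"
    using Suc by blast
  have star: "rho (Suc k) * (Efun (Suc (Suc k)) (theta * x) - theta * Efun (Suc (Suc k)) x)
      = bracket (Suc (Suc k)) * Efun (Suc k) x ^ ?q" for x :: "'a KK"
  proof -
    define Y where "Y = Efun (Suc k) x"
    define Z where "Z = Efun k x"
    have ZY: "Z ^ ?q - Z = bracket (Suc k) * Y" unfolding Y_def Z_def using Efun_rec0[of k x] rk by simp
    have "rho (Suc k) * (Efun (Suc (Suc k)) (theta * x) - theta * Efun (Suc (Suc k)) x)
        = (Efun (Suc k) (theta * x) ^ ?q - Efun (Suc k) (theta * x)) - theta * (Y ^ ?q - Y)"
      using Efun_rec0[of "Suc k" "theta * x"] Efun_rec0[of "Suc k" x] unfolding Y_def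
      by (simp add: algebra_simps)
    also have "\<dots> = ((theta * Y + Z ^ ?q) ^ ?q - (theta * Y + Z ^ ?q)) - theta * (Y ^ ?q - Y)"
      unfolding Y_def Z_def Tk ..
    also have "(theta * Y + Z ^ ?q) ^ ?q = theta ^ ?q * Y ^ ?q + (Z ^ ?q) ^ ?q"
      by (simp add: frob_add1 power_mult_distrib)
    also have "\<dots> - (theta * Y + Z ^ ?q) - theta * (Y ^ ?q - Y) = bracket (Suc 0) * Y ^ ?q + (Z ^ ?q - Z) ^ ?q"
      by (simp add: frob_add1' bracket_def algebra_simps)
    also have "\<dots> = (bracket (Suc 0) + bracket (Suc k) ^ ?q) * Y ^ ?q"
      by (simp add: ZY power_mult_distrib algebra_simps)
    also have "\<dots> = bracket (Suc (Suc k)) * Y ^ ?q" by (simp add: bracket_step)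
    finally show ?thesis unfolding Y_def .
  qed
  have e1: "theta * theta ^ Suc k = (theta ^ Suc (Suc k) :: 'a KK)" by simp
  have "rho (Suc k) * (1 - theta * 0) = bracket (Suc (Suc k)) * (1::'a KK) ^ ?q"
    using star[of "theta ^ Suc k"] unfolding e1 Efun_theta Efun_theta_Suc .
  hence r: "rho (Suc k) = (bracket (Suc (Suc k)) :: 'a KK)" by simp
  have bn: "bracket (Suc (Suc k)) \<noteq> (0 :: 'a KK)" by (rule bracket_nonzero) simp
  have "Efun (Suc (Suc k)) (theta * x) = theta * Efun (Suc (Suc k)) x + Efun (Suc k) x ^ ?q" for x :: "'a KK"
  proof -
    have "Efun (Suc (Suc k)) (theta * x) - theta * Efun (Suc (Suc k)) x = Efun (Suc k) x ^ ?q"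
      using star[of x] bn unfolding r by simp
    thus ?thesis by (metis diff_eq_eq add.commute)
  qed
  thus ?case using r by simp
qed

lemma Dprod_Suc: "Dprod (Suc d) = (bracket (Suc d) * Dprod d ^ card (UNIV :: 'a set) :: 'a::{finite,field} KK)"
proof -
  have "rho d = (bracket (Suc d) :: 'a KK)" using rho_eq by blast
  thus ?thesis unfolding rho_def using Dprod_nonzero[of d, where 'a='a] by (simp add: field_simps)
qed

lemma Efun_rec: "Efun d x ^ card (UNIV :: 'a set) = Efun d x + bracket (Suc d) * Efun (Suc d) (x :: 'a::{finite,field} KK)"
  using Efun_rec0[of d x] rho_eq[of d, where 'a='a] by (simp add: algebra_simps)

definition lam :: "nat \<Rightarrow> 'a::{finite,field} KK" where
  "lam d = (\<Prod>c\<in>Aset d - {0}. - embA c)"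

lemma theta_nonzero: "theta \<noteq> (0 :: 'a::{finite,field} KK)"
  by (simp add: theta_def)

lemma pf_lin1: "pf (Suc 0) (\<lambda>x. x - c)"
  using pf_lin by simp

lemma wilson_K: "(\<Prod>c\<in>(UNIV :: 'a::{finite,field} set) - {0}. - ec c) = (-1 :: 'a KK)"
proof -
  let ?q = "card (UNIV :: 'a set)"
  define W :: "'a KK \<Rightarrow> 'a KK" where "W Y = (\<Prod>c\<in>(UNIV :: 'a set) - {0}. Y - ec c)" for Y
  have q2: "?q \<ge> 2" by (rule card_ge2)
  have YW: "Y * W Y = Y ^ ?q - Y" for Y
  proof -
    have "(\<Prod>c\<in>(UNIV :: 'a set). Y - ec c) = (Y - ec 0) * W Y"
      unfolding W_def by (subst prod.remove[of _ 0]) auto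
    thus ?thesis using prod_lin_UNIV[of Y] by simp
  qed
  have pW: "pf (?q - 1) W"
  proof -
    have "pf (\<Sum>c\<in>(UNIV :: 'a set) - {0}. 1) W"
      unfolding W_def by (rule pf_prod) (auto intro: pf_lin pf_lin1)
    moreover have "(\<Sum>c\<in>(UNIV :: 'a set) - {0}. (1::nat)) = ?q - 1" by simp
    ultimately show ?thesis by simp
  qed
  have pV: "pf (?q - 1) (\<lambda>Y. Y ^ (?q - 1) - 1)"
    using pf_diff[OF pf_power[OF pf_id, of "?q - 1"] pf_const] by simp
  define S where "S = (\<lambda>k. theta ^ k :: 'a KK) ` {1..?q}"
  have cardS: "card S = ?q" unfolding S_def
    by (subst card_image) (auto simp: inj_on_def theta_pow_eq_iff)
  have eq: "W Y = Y ^ (?q - 1) - 1" if "Y \<in> S" for Y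
  proof -
    have Y0: "Y \<noteq> 0" using that theta_nonzero unfolding S_def by auto
    have "Y * W Y = Y * (Y ^ (?q - 1) - 1)"
      using YW[of Y] q2 by (simp add: algebra_simps power_Suc[symmetric] del: power_Suc)
    thus ?thesis using Y0 by simp
  qed
  have "W 0 = 0 ^ (?q - 1) - 1"
    by (rule pf_eq[OF pW pV, of S]) (use cardS q2 eq in \<open>auto simp: S_def\<close>)
  moreover have "(0::'a KK) ^ (?q - 1) = 0" using q2 by simp
  ultimately show ?thesis unfolding W_def by simp
qed

lemma lam_0: "lam 0 = (1 :: 'a::{finite,field} KK)"
  by (simp add: lam_def Aset_zero_eq)

lemma lam_Suc: "lam (Suc d) = (- lam d * Dprod d ^ (card (UNIV :: 'a set) - 1) :: 'a::{finite,field} KK)"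
proof -
  let ?q = "card (UNIV :: 'a set)"
  define g :: "'a \<times> 'a poly \<Rightarrow> 'a poly" where "g = (\<lambda>(c, b). monom c d + b)"
  define X where "X = (UNIV \<times> Aset d) - {(0::'a, 0::'a poly)}"
  have gX: "Aset (Suc d) - {0} = g ` X"
  proof -
    have "g ` X = g ` (UNIV \<times> Aset d) - g ` {(0, 0)}"
      unfolding X_def by (rule inj_on_image_set_diff) (use Aset_Suc_inj[of d] in \<open>auto simp: g_def\<close>)
    thus ?thesis by (simp add: g_def Aset_Suc)
  qed
  have injX: "inj_on g X" using Aset_Suc_inj[of d] unfolding X_def g_def by (rule inj_on_subset) auto
  have "lam (Suc d) = (\<Prod>p\<in>X. - embA (g p))"
    unfolding lam_def gX by (subst prod.reindex[OF injX]) simp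
  also have X_split: "X = ({0} \<times> (Aset d - {0})) \<union> ((UNIV - {0}) \<times> Aset d)"
    unfolding X_def by auto
  also have "(\<Prod>p\<in>({0} \<times> (Aset d - {0})) \<union> ((UNIV - {0}) \<times> Aset d). - embA (g p)) =
      (\<Prod>p\<in>{0} \<times> (Aset d - {0}). - embA (g p)) * (\<Prod>p\<in>(UNIV - {0}) \<times> Aset d. - embA (g p))"
    by (rule prod.union_disjoint) auto
  also have "(\<Prod>p\<in>{0} \<times> (Aset d - {0}). - embA (g p)) = lam d"
  proof -
    have e: "{0::'a} \<times> (Aset d - {0}) = (\<lambda>b. (0::'a, b)) ` (Aset d - {0})" by auto
    have "(\<Prod>p\<in>{0::'a} \<times> (Aset d - {0}). - embA (g p)) = (\<Prod>p\<in>(\<lambda>b. (0::'a, b)) ` (Aset d - {0}). - embA (g p))"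
      by (simp only: e)
    also have "\<dots> = (\<Prod>b\<in>Aset d - {0}. - embA (g (0, b)))"
      by (rule prod.reindex_cong[of "\<lambda>b. (0::'a, b)"]) (auto simp: inj_on_def)
    finally show ?thesis unfolding lam_def by (simp add: g_def)
  qed
  also have "(\<Prod>p\<in>(UNIV - {0}) \<times> Aset d. - embA (g p)) =
      (\<Prod>c\<in>UNIV - {0}. \<Prod>b\<in>Aset d. - embA (monom c d + b))"
    by (subst prod.cartesian_product) (simp add: g_def case_prod_unfold)
  also have "\<dots> = (\<Prod>c\<in>UNIV - {0}. ee d (- (ec c * theta ^ d)))"
    unfolding ee_def by (intro prod.cong refl) (simp add: embA_monom algebra_simps)
  also have "\<dots> = (\<Prod>c\<in>(UNIV :: 'a set) - {0}. (- ec c) * Dprod d)"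
    by (intro prod.cong refl) (simp add: ee_neg ee_hom ee_D)
  also have "\<dots> = (\<Prod>c\<in>(UNIV :: 'a set) - {0}. - ec c) * Dprod d ^ (?q - 1)"
    by (subst prod.distrib) simp
  also have "\<dots> = - (Dprod d ^ (?q - 1))" by (simp add: wilson_K)
  finally show ?thesis by simp
qed

lemma ell_Suc: "ell (Suc d) = (- ell d * bracket (Suc d) :: 'a::{finite,field} KK)"
  by (simp add: ell_def bracket_def algebra_simps)

lemma lam_ell: "lam d * ell d = (Dprod d :: 'a::{finite,field} KK)"
proof (induction d)
  case 0 thus ?case by (simp add: lam_0 ell_def Dprod_0)
next
  case (Suc d)
  let ?q = "card (UNIV :: 'a set)"
  have q: "Dprod d ^ ?q = Dprod d ^ (?q - 1) * (Dprod d :: 'a KK)" using card_ge2[where 'a='a]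
    by (metis Suc_diff_1 less_le_trans pos2 power_Suc2)
  have "lam (Suc d) * ell (Suc d) = (lam d * ell d) * Dprod d ^ (?q - 1) * (bracket (Suc d) :: 'a KK)"
    by (simp add: lam_Suc ell_Suc algebra_simps)
  also have "\<dots> = Dprod d * Dprod d ^ (?q - 1) * (bracket (Suc d) :: 'a KK)" by (simp only: Suc)
  also have "\<dots> = Dprod (Suc d)" by (simp add: Dprod_Suc q algebra_simps)
  finally show ?case .
qed

lemma lagrange_delta:
  assumes "a \<in> Aset d" "b \<in> Aset d"
  shows "ell d * Equot d (embA b - embA a) = (if a = b then 1 else (0 :: 'a::{finite,field} KK))"
proof (cases "a = b")
  case True
  have "Equot d 0 = inverse (Dprod d) * (lam d :: 'a KK)" by (simp add: Equot_def lam_def)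
  hence "ell d * Equot d 0 = (lam d * ell d) / (Dprod d :: 'a KK)" by (simp add: field_simps)
  thus ?thesis using True by (simp add: lam_ell Dprod_nonzero)
next
  case False
  have "b - a \<in> Aset d - {0}" using assms False by (auto intro: Aset_diff)
  hence "(\<Prod>c\<in>Aset d - {0}. embA (b - a) - embA c) = (0 :: 'a KK)"
    by (subst prod_zero_iff) (auto intro!: bexI[of _ "b - a"])
  thus ?thesis using False by (simp add: Equot_def)
qed

lemma Nop_interp:
  assumes "b \<in> Aset d"
  shows "Nop d f (embA b) = f b"
proof -
  have "Nop d f (embA b) = (\<Sum>a\<in>Aset d. f a * (ell d * Equot d (embA b - embA a)))"
    by (simp add: Nop_def mult.assoc)
  also have "\<dots> = (\<Sum>a\<in>Aset d. if a = b then f a else 0)"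
    by (intro sum.cong refl) (simp add: lagrange_delta assms)
  also have "\<dots> = f b" using assms by simp
  finally show ?thesis .
qed

lemma card_Aset_minus: "card (Aset d - {0} :: 'a::{finite,field} poly set) = card (UNIV :: 'a set) ^ d - 1"
  by (simp add: card_Aset)

lemma pf_Nop: "pf (card (UNIV :: 'a set) ^ d - 1) (Nop d (f :: 'a::{finite,field} poly \<Rightarrow> 'a KK))"
proof -
  have "pf (card (UNIV :: 'a set) ^ d - 1) (\<lambda>z. \<Sum>a\<in>Aset d. f a * ell d * Equot d (z - embA a))"
  proof (rule pf_sum, simp)
    fix a :: "'a poly"
    have "pf (\<Sum>c\<in>(Aset d - {0} :: 'a poly set). 1) (\<lambda>z. \<Prod>c\<in>Aset d - {0}. z - (embA a + embA c))"
      by (rule pf_prod[of "Aset d - {0}" "\<lambda>c. 1" "\<lambda>c z. z - (embA a + embA c)"]) (auto intro: pf_lin pf_lin1)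
    hence "pf (card (UNIV :: 'a set) ^ d - 1) (\<lambda>z. \<Prod>c\<in>Aset d - {0}. z - (embA a + embA c))"
      by (simp add: card_Aset)
    hence "pf (card (UNIV :: 'a set) ^ d - 1) (\<lambda>z. (f a * ell d * inverse (Dprod d)) * (\<Prod>c\<in>Aset d - {0}. z - (embA a + embA c)))"
      by (rule pf_cmult)
    thus "pf (card (UNIV :: 'a set) ^ d - 1) (\<lambda>z. f a * ell d * Equot d (z - embA a))"
      by (simp add: Equot_def algebra_simps diff_diff_eq)
  qed
  thus ?thesis unfolding Nop_def[abs_def] by simp
qed

lemma pf_Efun: "pf (card (UNIV :: 'a set) ^ d) (Efun d :: 'a::{finite,field} KK \<Rightarrow> 'a KK)"
proof -
  have "pf (\<Sum>c\<in>(Aset d :: 'a poly set). 1) (\<lambda>z. \<Prod>c\<in>Aset d. z - (embA c :: 'a KK))"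
    by (rule pf_prod[of "Aset d" "\<lambda>c. 1" "\<lambda>c z. z - (embA c :: 'a KK)"]) (auto intro: pf_lin pf_lin1)
  hence "pf (card (UNIV :: 'a set) ^ d) (\<lambda>z. inverse (Dprod d) * (\<Prod>c\<in>Aset d. z - (embA c :: 'a KK)))"
    by (intro pf_cmult) (simp add: card_Aset)
  thus ?thesis unfolding Efun_def[abs_def] by simp
qed

lemma bfun_0: "bfun 0 t = (1 :: 'a::{finite,field} KK)" by (simp add: bfun_def)

lemma bfun_vanish: "m < j \<Longrightarrow> bfun j (theta ^ (card (UNIV :: 'a set) ^ m)) = (0 :: 'a::{finite,field} KK)"
  unfolding bfun_def by (subst prod_zero_iff) auto

lemma newton_Q: "(\<Sum>j\<le>m. bfun j (theta ^ (card (UNIV :: 'a set) ^ m)) * Efun j x) = (x :: 'a::{finite,field} KK) ^ (card (UNIV :: 'a set) ^ m)"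
proof (induction m arbitrary: x)
  case 0 thus ?case by (simp add: bfun_0 Efun_0)
next
  case (Suc m)
  let ?q = "card (UNIV :: 'a set)"
  define T :: "'a KK" where "T = theta ^ (?q ^ Suc m)"
  define \<beta> :: "nat \<Rightarrow> 'a KK" where "\<beta> j = (\<Prod>i<j. T - theta ^ (?q ^ Suc i))" for j
  have beta_eq: "bfun j (theta ^ (?q ^ m)) ^ ?q = \<beta> j" for j
  proof -
    have "bfun j (theta ^ (?q ^ m)) ^ ?q = (\<Prod>i<j. ((theta :: 'a KK) ^ (?q ^ m) - theta ^ (?q ^ i)) ^ ?q)"
      unfolding bfun_def by (simp add: prod_power_distrib)
    also have "\<dots> = \<beta> j" unfolding \<beta>_def T_def
      by (intro prod.cong refl) (simp add: frob_add1' power_mult[symmetric] mult.commute)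
    finally show ?thesis .
  qed
  have beta_last: "\<beta> (Suc m) = 0" unfolding \<beta>_def T_def by (subst prod_zero_iff) auto
  have gamma: "bfun (Suc j) T = \<beta> (Suc j) + bracket (Suc j) * \<beta> j" for j
  proof -
    have "bfun (Suc j) T = (T - theta) * \<beta> j"
      unfolding bfun_def \<beta>_def by (subst prod.lessThan_Suc_shift) simp
    moreover have "\<beta> (Suc j) = \<beta> j * (T - theta ^ (?q ^ Suc j))" unfolding \<beta>_def by simp
    ultimately show ?thesis by (simp add: bracket_def algebra_simps)
  qed
  have "x ^ (?q ^ Suc m) = (x ^ (?q ^ m)) ^ ?q" by (simp add: power_mult[symmetric] mult.commute)
  also have "\<dots> = (\<Sum>j\<le>m. bfun j (theta ^ (?q ^ m)) * Efun j x) ^ ?q" by (simp add: Suc.IH)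
  also have "\<dots> = (\<Sum>j\<le>m. \<beta> j * Efun j x ^ ?q)"
    using frob_sum[of "\<lambda>j. bfun j (theta ^ (?q ^ m)) * Efun j x" "{..m}" 1]
    by (simp add: power_mult_distrib beta_eq)
  also have "\<dots> = (\<Sum>j\<le>m. \<beta> j * Efun j x) + (\<Sum>j\<le>m. bracket (Suc j) * \<beta> j * Efun (Suc j) x)"
    by (simp add: Efun_rec algebra_simps sum.distrib)
  also have "(\<Sum>j\<le>m. \<beta> j * Efun j x) = \<beta> 0 * Efun 0 x + (\<Sum>j\<le>m. \<beta> (Suc j) * Efun (Suc j) x)"
  proof -
    have "(\<Sum>j\<le>m. \<beta> j * Efun j x) = (\<Sum>j\<le>Suc m. \<beta> j * Efun j x)"
      by (simp add: beta_last)
    also have "\<dots> = \<beta> 0 * Efun 0 x + (\<Sum>j\<le>m. \<beta> (Suc j) * Efun (Suc j) x)"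
      by (rule sum.atMost_Suc_shift)
    finally show ?thesis .
  qed
  also have "\<beta> 0 * Efun 0 x + (\<Sum>j\<le>m. \<beta> (Suc j) * Efun (Suc j) x) + (\<Sum>j\<le>m. bracket (Suc j) * \<beta> j * Efun (Suc j) x)
      = bfun 0 T * Efun 0 x + (\<Sum>j\<le>m. bfun (Suc j) T * Efun (Suc j) x)"
  proof -
    have "(\<Sum>j\<le>m. bfun (Suc j) T * Efun (Suc j) x) = (\<Sum>j\<le>m. \<beta> (Suc j) * Efun (Suc j) x) + (\<Sum>j\<le>m. bracket (Suc j) * \<beta> j * Efun (Suc j) x)"
      unfolding gamma by (simp add: distrib_right sum.distrib)
    moreover have "\<beta> 0 = 1" by (simp add: \<beta>_def)
    ultimately show ?thesis by (simp add: bfun_0 add.assoc)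
  qed
  also have "\<dots> = (\<Sum>j\<le>Suc m. bfun j T * Efun j x)" by (rule sum.atMost_Suc_shift[symmetric])
  finally show ?case unfolding T_def by simp
qed

lemma chi_altdef: "chi t a = (\<Sum>i\<le>degree a. ec (coeff a i) * (t :: 'a::{finite,field} KK) ^ i)"
proof -
  have d: "degree (map_poly (\<lambda>c. ec c) a) = degree a" by (rule degree_map_poly) simp
  show ?thesis unfolding chi_def poly_altdef d by (simp add: coeff_map_poly)
qed

lemma embA_altdef: "embA a = (\<Sum>i\<le>degree a. ec (coeff a i) * (theta :: 'a::{finite,field} KK) ^ i)"
proof -
  have "embA a = embA (\<Sum>i\<le>degree a. monom (coeff a i) i)" by (simp add: poly_as_sum_of_monoms)
  also have "\<dots> = (\<Sum>i\<le>degree a. ec (coeff a i) * theta ^ i)" by (simp add: embA_sum embA_monom)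
  finally show ?thesis .
qed

lemma chi_theta: "chi theta a = (embA a :: 'a::{finite,field} KK)"
  by (simp only: chi_altdef embA_altdef[of a])

lemma chi_frob: "chi (t ^ (card (UNIV :: 'a set) ^ m)) a = chi t a ^ (card (UNIV :: 'a set) ^ m)" for t :: "'a::{finite,field} KK"
  unfolding chi_altdef frob_sum
  by (intro sum.cong refl) (simp add: power_mult_distrib ec_power_q power_mult[symmetric] mult.commute)

lemma pf_bfun: "pf j (bfun j :: 'a::{finite,field} KK \<Rightarrow> 'a KK)"
proof -
  have "pf (\<Sum>i<j. 1) (\<lambda>t. \<Prod>i<j. t - (theta :: 'a KK) ^ (card (UNIV :: 'a set) ^ i))"
    by (rule pf_prod) (auto intro: pf_lin pf_lin1)
  thus ?thesis unfolding bfun_def[abs_def] by simp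
qed

lemma pf_chi: "pf (degree a) (\<lambda>t. chi t a :: 'a::{finite,field} KK)"
  unfolding pf_def chi_def
  by (rule exI[of _ "map_poly (\<lambda>c. ec c) a"]) (simp add: degree_map_poly)

definition Mfun :: "nat \<Rightarrow> 'a::{finite,field} KK \<Rightarrow> 'a KK \<Rightarrow> 'a KK" where
  "Mfun d t z = (\<Sum>j<d. bfun j t * Efun j z)"

lemma Mfun_interp:
  assumes "a \<in> Aset d"
  shows "Mfun d t (embA a) = chi t (a :: 'a::{finite,field} poly)"
proof (cases "d = 0")
  case True
  hence "a = 0" using assms by (simp add: Aset_zero_eq)
  thus ?thesis using True by (simp add: Mfun_def chi_def)
next
  case False
  let ?q = "card (UNIV :: 'a set)"
  have q1: "?q > 1" using card_ge2[where 'a='a] by simp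
  define S where "S = (\<lambda>m. theta ^ (?q ^ m) :: 'a KK) ` {..<d}"
  have cardS: "card S = d" unfolding S_def
    by (subst card_image) (auto simp: inj_on_def theta_pow_eq_iff power_inject_exp[OF q1])
  have pM: "pf (d - 1) (\<lambda>t. Mfun d t (embA a))"
    unfolding Mfun_def
  proof (rule pf_sum, simp)
    fix j assume j: "j \<in> {..<d}"
    have "pf j (\<lambda>t. Efun j (embA a) * bfun j t)" by (rule pf_cmult[OF pf_bfun])
    hence "pf (d - 1) (\<lambda>t. Efun j (embA a) * bfun j t)" by (rule pf_mono) (use j in auto)
    thus "pf (d - 1) (\<lambda>t. bfun j t * Efun j (embA a))" by (simp add: mult.commute)
  qed
  have degA: "degree a \<le> d - 1"
  proof (cases "a = 0")
    case False thus ?thesis using assms unfolding Aset_def by auto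
  qed simp
  have pC: "pf (d - 1) (\<lambda>t. chi t a)" by (rule pf_mono[OF pf_chi degA])
  show ?thesis
  proof (rule pf_eq[OF pM pC, of S])
    show "finite S" unfolding S_def by simp
    show "d - 1 < card S" using cardS False by simp
    fix t assume "t \<in> S"
    then obtain m where m: "m < d" "t = theta ^ (?q ^ m)" unfolding S_def by auto
    have "Mfun d t (embA a) = (\<Sum>j\<le>m. bfun j t * Efun j (embA a))"
      unfolding Mfun_def
      by (rule sum.mono_neutral_right) (use m in \<open>auto simp: bfun_vanish\<close>)
    also have "\<dots> = embA a ^ (?q ^ m)" unfolding m(2) by (rule newton_Q)
    also have "\<dots> = chi t a" unfolding m(2) chi_frob chi_theta ..
    finally show "Mfun d t (embA a) = chi t a" .
  qed
qed

lemma pf_Mfun: "pf (card (UNIV :: 'a set) ^ d - 1) (Mfun d (t :: 'a::{finite,field} KK))"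
proof -
  have "pf (card (UNIV :: 'a set) ^ d - 1) (\<lambda>z. \<Sum>j<d. bfun j t * Efun j z)"
  proof (rule pf_sum, simp)
    fix j assume j: "j \<in> {..<d}"
    have "card (UNIV :: 'a set) ^ j < card (UNIV :: 'a set) ^ d"
      using j card_ge2[where 'a='a] by (intro power_strict_increasing) auto
    thus "pf (card (UNIV :: 'a set) ^ d - 1) (\<lambda>z. bfun j t * Efun j z)"
      by (intro pf_cmult pf_mono[OF pf_Efun]) simp
  qed
  thus ?thesis unfolding Mfun_def[abs_def] by simp
qed

lemma N_eq: "Nop d (chi t) z = Mfun d t (z :: 'a::{finite,field} KK)"
proof (rule pf_eq[OF pf_Nop pf_Mfun, of "embA ` Aset d"])
  show "finite (embA ` Aset d :: 'a KK set)" by simp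
  show "card (UNIV :: 'a set) ^ d - 1 < card (embA ` Aset d :: 'a KK set)"
    using card_ge2[where 'a='a] by (simp add: card_embA_Aset)
  fix x :: "'a KK" assume "x \<in> embA ` Aset d"
  then obtain a where "a \<in> Aset d" "x = embA a" by auto
  thus "Nop d (chi t) x = Mfun d t x" by (simp add: Nop_interp Mfun_interp)
qed

lemma sum01_card:
  assumes "finite I" "\<alpha> \<in> I \<rightarrow>\<^sub>E {0::nat, 1}"
  shows "sum \<alpha> I = card {i\<in>I. \<alpha> i = 1}"
proof -
  have "sum \<alpha> I = (\<Sum>i\<in>I. if \<alpha> i = 1 then 1 else 0)"
    using assms(2) by (intro sum.cong refl) (auto simp: PiE_iff)
  also have "\<dots> = card (I \<inter> {i. \<alpha> i = 1})"
    using assms(1) by (simp add: sum.If_cases)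
  also have "I \<inter> {i. \<alpha> i = 1} = {i\<in>I. \<alpha> i = 1}" by auto
  finally show ?thesis .
qed

lemma alpha_sum:
  fixes x y :: "nat \<Rightarrow> 'b::comm_ring_1"
  assumes fin: "finite I"
  shows "(\<Sum>\<alpha>\<in>{\<alpha>. \<alpha> \<in> I \<rightarrow>\<^sub>E {0::nat, 1} \<and> sum \<alpha> I = l}. \<Prod>i\<in>I. x i ^ (1 - \<alpha> i) * y i ^ (\<alpha> i))
       = (\<Sum>J\<in>{J. J \<subseteq> I \<and> card J = l}. (\<Prod>i\<in>J. y i) * (\<Prod>i\<in>I - J. x i))"
proof (rule sum.reindex_bij_witness[of _ "\<lambda>J i. if i \<in> I then (if i \<in> J then 1 else 0) else undefined"
      "\<lambda>\<alpha>. {i\<in>I. \<alpha> i = 1}"])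
  fix \<alpha> assume a: "\<alpha> \<in> {\<alpha>. \<alpha> \<in> I \<rightarrow>\<^sub>E {0::nat, 1} \<and> sum \<alpha> I = l}"
  hence aP: "\<alpha> \<in> I \<rightarrow>\<^sub>E {0::nat, 1}" and al: "sum \<alpha> I = l" by auto
  show "(\<lambda>i. if i \<in> I then (if i \<in> {i\<in>I. \<alpha> i = 1} then 1 else 0) else undefined) = \<alpha>"
  proof
    fix i show "(if i \<in> I then (if i \<in> {i\<in>I. \<alpha> i = 1} then 1 else 0) else undefined) = \<alpha> i"
      using aP extensional_arb[of \<alpha> I i] by (cases "i \<in> I") (auto simp: PiE_iff)
  qed
  show "{i\<in>I. \<alpha> i = 1} \<in> {J. J \<subseteq> I \<and> card J = l}"
    using sum01_card[OF fin aP] al by auto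
  let ?J = "{i\<in>I. \<alpha> i = 1}"
  have "(\<Prod>i\<in>I. x i ^ (1 - \<alpha> i) * y i ^ (\<alpha> i)) =
      (\<Prod>i\<in>I - ?J. x i ^ (1 - \<alpha> i) * y i ^ (\<alpha> i)) * (\<Prod>i\<in>?J. x i ^ (1 - \<alpha> i) * y i ^ (\<alpha> i))"
    by (rule prod.subset_diff) (use fin in auto)
  also have "(\<Prod>i\<in>?J. x i ^ (1 - \<alpha> i) * y i ^ (\<alpha> i)) = (\<Prod>i\<in>?J. y i)"
    by (intro prod.cong refl) auto
  also have "(\<Prod>i\<in>I - ?J. x i ^ (1 - \<alpha> i) * y i ^ (\<alpha> i)) = (\<Prod>i\<in>I - ?J. x i)"
  proof (intro prod.cong refl)
    fix i assume "i \<in> I - ?J"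
    hence "\<alpha> i = 0" using aP by (auto simp: PiE_iff)
    thus "x i ^ (1 - \<alpha> i) * y i ^ (\<alpha> i) = x i" by simp
  qed
  finally show "(\<Prod>i\<in>?J. y i) * (\<Prod>i\<in>I - ?J. x i) = (\<Prod>i\<in>I. x i ^ (1 - \<alpha> i) * y i ^ (\<alpha> i))"
    by (simp add: mult.commute)
next
  fix J assume J: "J \<in> {J. J \<subseteq> I \<and> card J = l}"
  define \<alpha> where "\<alpha> = (\<lambda>i. if i \<in> I then (if i \<in> J then 1 else 0) else undefined :: nat)"
  show "{i\<in>I. (\<lambda>i. if i \<in> I then (if i \<in> J then 1 else 0) else undefined) i = (1::nat)} = J"
    using J by (auto split: if_splits)
  have aP: "\<alpha> \<in> I \<rightarrow>\<^sub>E {0::nat, 1}" unfolding \<alpha>_def by (auto split: if_splits)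
  have "sum \<alpha> I = card {i\<in>I. \<alpha> i = 1}" by (rule sum01_card[OF fin aP])
  also have "{i\<in>I. \<alpha> i = 1} = J" using J unfolding \<alpha>_def by auto
  finally show "(\<lambda>i. if i \<in> I then (if i \<in> J then 1 else 0) else undefined) \<in> {\<alpha>. \<alpha> \<in> I \<rightarrow>\<^sub>E {0::nat, 1} \<and> sum \<alpha> I = l}"
    using aP J unfolding \<alpha>_def by auto
qed

lemma prod_expand:
  fixes X B :: "nat \<Rightarrow> 'b::comm_ring_1"
  assumes fin: "finite I"
  shows "(\<Prod>i\<in>I. X i + B i * E) =
    (\<Sum>l\<le>card I. E ^ l * (\<Sum>J\<in>{J. J \<subseteq> I \<and> card J = l}. (\<Prod>i\<in>J. B i) * (\<Prod>i\<in>I - J. X i)))"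
proof -
  have "(\<Prod>i\<in>I. X i + B i * E) = (\<Prod>i\<in>I. B i * E + X i)" by (simp add: add.commute)
  also have "\<dots> = (\<Sum>J\<in>Pow I. (\<Prod>i\<in>J. B i * E) * (\<Prod>i\<in>I - J. X i))"
    by (rule prod_add[OF fin])
  also have "\<dots> = (\<Sum>J\<in>Pow I. E ^ card J * ((\<Prod>i\<in>J. B i) * (\<Prod>i\<in>I - J. X i)))"
    by (intro sum.cong refl) (simp add: prod.distrib algebra_simps)
  also have "\<dots> = (\<Sum>l\<le>card I. \<Sum>J\<in>{J\<in>Pow I. card J = l}. E ^ card J * ((\<Prod>i\<in>J. B i) * (\<Prod>i\<in>I - J. X i)))"
    by (rule sum.group[symmetric]) (use fin in \<open>auto intro: card_mono\<close>)
  also have "\<dots> = (\<Sum>l\<le>card I. E ^ l * (\<Sum>J\<in>{J. J \<subseteq> I \<and> card J = l}. (\<Prod>i\<in>J. B i) * (\<Prod>i\<in>I - J. X i)))"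
    by (intro sum.cong refl) (auto simp: sum_distrib_left)
  finally show ?thesis .
qed

lemma pf_Mfun': "d \<ge> 1 \<Longrightarrow> pf (card (UNIV :: 'a set) ^ (d - 1)) (Mfun d (t :: 'a::{finite,field} KK))"
proof -
  assume d: "d \<ge> 1"
  have "pf (card (UNIV :: 'a set) ^ (d - 1)) (\<lambda>z. \<Sum>j<d. bfun j t * Efun j z)"
  proof (rule pf_sum, simp)
    fix j assume j: "j \<in> {..<d}"
    have "card (UNIV :: 'a set) ^ j \<le> card (UNIV :: 'a set) ^ (d - 1)"
      using j card_ge2[where 'a='a] by (intro power_increasing) auto
    thus "pf (card (UNIV :: 'a set) ^ (d - 1)) (\<lambda>z. bfun j t * Efun j z)"
      by (intro pf_cmult pf_mono[OF pf_Efun])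
  qed
  thus ?thesis unfolding Mfun_def[abs_def] by simp
qed

lemma arith_key:
  fixes q s l :: nat
  assumes q: "q \<ge> 2" and s: "s \<le> 2 * (q - 1)" and l: "l \<le> s"
  shows "(if l < q then l else l - q + 1) * q + (s - l) \<le> q * q - 1"
proof -
  obtain r where r: "q = Suc r" using q by (cases q) auto
  have qq: "q * q = r * r + 2 * r + 1" using r by simp
  show ?thesis
  proof (cases "l < q")
    case True
    hence "l \<le> r" using r by simp
    hence "l * r \<le> r * r" by (simp add: mult_right_mono)
    moreover have "l * q = l * r + l" using r by simp
    moreover have "q - 1 = r" using r by simp
    moreover have e: "(if l < q then l else l - q + 1) = l" using True by simp
    ultimately show ?thesis unfolding e using s l qq by linarith
  next
    case False
    define m where "m = l - q + 1"
    have lm: "l = m + r" using False r unfolding m_def by simp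
    have "m \<le> r" using s l lm r by simp
    hence "m * r \<le> r * r" by (simp add: mult_right_mono)
    moreover have "m * q = m * r + m" using r by simp
    moreover have "q - 1 = r" using r by simp
    moreover have e: "(if l < q then l else l - q + 1) = m" using False unfolding m_def by simp
    ultimately show ?thesis unfolding e using s l qq lm by linarith
  qed
qed

lemma arith_bound:
  fixes q s l d :: nat
  assumes q: "q \<ge> 2" and s: "s \<le> 2 * (q - 1)" and l: "l \<le> s" and d: "d \<ge> 1"
  shows "(if l < q then l else l - q + 1) * q ^ d + (s - l) * q ^ (d - 1) \<le> q ^ (d + 1) - 1"
proof -
  define Q where "Q = q ^ (d - 1)"
  have Q1: "Q \<ge> 1" unfolding Q_def using q by simp
  have qd: "q ^ d = q * Q" unfolding Q_def using d by (cases d) auto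
  have qd1: "q ^ (d + 1) = q * q * Q" unfolding Q_def using d by (cases d) auto
  define A where "A = (if l < q then l else l - q + 1)"
  have key: "A * q + (s - l) \<le> q * q - 1" unfolding A_def by (rule arith_key[OF q s l])
  have "A * q ^ d + (s - l) * q ^ (d - 1) = (A * q + (s - l)) * Q"
    unfolding qd Q_def[symmetric] by (simp add: algebra_simps)
  also have "\<dots> \<le> (q * q - 1) * Q" by (rule mult_right_mono[OF key]) simp
  also have "\<dots> = q * q * Q - Q" by (simp add: algebra_simps)
  also have "\<dots> \<le> q ^ (d + 1) - 1" unfolding qd1 using Q1 by simp
  finally show ?thesis unfolding A_def .
qed

theorem proposition2p8:
  fixes t :: "nat \<Rightarrow> 'a::{finite,field} KK" and z :: "'a KK" and d s :: nat
  assumes "d \<ge> 1" and "1 \<le> s" and "s \<le> 2 * (card (UNIV :: 'a set) - 1)"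
  shows "Nop (d+1) (\<lambda>a. \<Prod>i\<in>{1..s}. chi (t i) a) z =
     (\<Prod>i\<in>{1..s}. Nop (d+1) (chi (t i)) z)
     - bracket (d+1) * Efun (d+1) z *
       (\<Sum>l\<in>{card (UNIV :: 'a set)..s}. Efun d z ^ (l - card (UNIV :: 'a set)) *
          (\<Sum>\<alpha>\<in>{\<alpha>. \<alpha> \<in> {1..s} \<rightarrow>\<^sub>E {0::nat, 1} \<and> sum \<alpha> {1..s} = l}.
             \<Prod>i\<in>{1..s}. Nop d (chi (t i)) z ^ (1 - \<alpha> i) * bfun d (t i) ^ (\<alpha> i)))"
proof -
  let ?q = "card (UNIV :: 'a set)"
  have q2: "?q \<ge> 2" by (rule card_ge2)
  have d1: "d \<ge> 1" by fact
  define I where "I = {1..s}"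
  have finI: "finite I" unfolding I_def by simp
  have cardI: "card I = s" unfolding I_def by simp
  define X where "X i w = Nop d (chi (t i)) w" for i w
  define Bv where "Bv i = bfun d (t i)" for i
  define S where "S l w = (\<Sum>J\<in>{J. J \<subseteq> I \<and> card J = l}. (\<Prod>i\<in>J. Bv i) * (\<Prod>i\<in>I - J. X i w))" for l w
  define f where "f l = (if l < ?q then l else l - ?q + 1)" for l
  define RHS where "RHS w = (\<Prod>i\<in>{1..s}. Nop (d+1) (chi (t i)) w)
     - bracket (d+1) * Efun (d+1) w *
       (\<Sum>l\<in>{?q..s}. Efun d w ^ (l - ?q) *
          (\<Sum>\<alpha>\<in>{\<alpha>. \<alpha> \<in> {1..s} \<rightarrow>\<^sub>E {0::nat, 1} \<and> sum \<alpha> {1..s} = l}.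
             \<Prod>i\<in>{1..s}. Nop d (chi (t i)) w ^ (1 - \<alpha> i) * bfun d (t i) ^ (\<alpha> i)))" for w
  define LHS where "LHS w = Nop (d+1) (\<lambda>a. \<Prod>i\<in>{1..s}. chi (t i) a) w" for w
  have N1: "Nop (d+1) (chi (t i)) w = X i w + Bv i * Efun d w" for i w
    unfolding X_def Bv_def N_eq Mfun_def by simp
  have alpha: "(\<Sum>\<alpha>\<in>{\<alpha>. \<alpha> \<in> {1..s} \<rightarrow>\<^sub>E {0::nat, 1} \<and> sum \<alpha> {1..s} = l}.
             \<Prod>i\<in>{1..s}. Nop d (chi (t i)) w ^ (1 - \<alpha> i) * bfun d (t i) ^ (\<alpha> i)) = S l w" for l w
    unfolding S_def X_def Bv_def I_def by (rule alpha_sum) simp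
  have prodN: "(\<Prod>i\<in>{1..s}. Nop (d+1) (chi (t i)) w) = (\<Sum>l\<le>s. Efun d w ^ l * S l w)" for w
    unfolding N1 S_def using prod_expand[OF finI, of "\<lambda>i. X i w" "\<lambda>i. Bv i" "Efun d w"] cardI
    by (simp add: I_def)
  have R: "RHS w = (\<Sum>l\<le>s. Efun d w ^ f l * S l w)" for w
  proof -
    let ?E = "Efun d w"
    have br: "bracket (d+1) * Efun (d+1) w = ?E ^ ?q - ?E"
      using Efun_rec[of d w] by simp
    have sub: "(\<Sum>l\<in>{?q..s}. ?E ^ (l - ?q) * S l w) = (\<Sum>l\<le>s. if ?q \<le> l then ?E ^ (l - ?q) * S l w else 0)"
    proof -
      have "(\<Sum>l\<le>s. if ?q \<le> l then ?E ^ (l - ?q) * S l w else 0) = (\<Sum>l\<in>{?q..s}. ?E ^ (l - ?q) * S l w)"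
        by (rule sum.mono_neutral_cong_right) auto
      thus ?thesis by simp
    qed
    have "RHS w = (\<Sum>l\<le>s. ?E ^ l * S l w) - (?E ^ ?q - ?E) * (\<Sum>l\<le>s. if ?q \<le> l then ?E ^ (l - ?q) * S l w else 0)"
      unfolding RHS_def prodN br alpha sub ..
    also have "\<dots> = (\<Sum>l\<le>s. ?E ^ l * S l w - (?E ^ ?q - ?E) * (if ?q \<le> l then ?E ^ (l - ?q) * S l w else 0))"
      by (simp add: sum_distrib_left sum_subtractf)
    also have "\<dots> = (\<Sum>l\<le>s. ?E ^ f l * S l w)"
    proof (intro sum.cong refl)
      fix l
      show "?E ^ l * S l w - (?E ^ ?q - ?E) * (if ?q \<le> l then ?E ^ (l - ?q) * S l w else 0) = ?E ^ f l * S l w"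
      proof (cases "?q \<le> l")
        case True
        have "?E ^ l = ?E ^ ?q * ?E ^ (l - ?q)" using True by (simp add: power_add[symmetric])
        moreover have "?E ^ f l = ?E * ?E ^ (l - ?q)" using True q2 unfolding f_def by simp
        ultimately show ?thesis using True by (simp add: algebra_simps)
      next
        case False thus ?thesis unfolding f_def by simp
      qed
    qed
    finally show ?thesis .
  qed
  have pX: "pf (?q ^ (d - 1)) (X i)" for i
  proof -
    have "X i = Mfun d (t i)" unfolding X_def[abs_def] by (simp add: N_eq[abs_def])
    thus ?thesis using pf_Mfun'[OF d1, of "t i"] by simp
  qed
  have pR: "pf (?q ^ (d + 1) - 1) (\<lambda>w. \<Sum>l\<le>s. Efun d w ^ f l * S l w)"
  proof (rule pf_sum, simp)
    fix l assume l: "l \<in> {..s}"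
    have pS: "pf ((s - l) * ?q ^ (d - 1)) (S l)"
    proof -
      have "pf ((s - l) * ?q ^ (d - 1)) (\<lambda>w. \<Sum>J\<in>{J. J \<subseteq> I \<and> card J = l}. (\<Prod>i\<in>J. Bv i) * (\<Prod>i\<in>I - J. X i w))"
      proof (rule pf_sum)
        show "finite {J. J \<subseteq> I \<and> card J = l}" using finI by simp
        fix J assume J: "J \<in> {J. J \<subseteq> I \<and> card J = l}"
        have "pf (\<Sum>i\<in>I - J. ?q ^ (d - 1)) (\<lambda>w. \<Prod>i\<in>I - J. X i w)"
          by (rule pf_prod) (use finI pX in auto)
        moreover have "(\<Sum>i\<in>I - J. ?q ^ (d - 1)) = (s - l) * ?q ^ (d - 1)"
        proof -
          have "finite J" using J finI by (auto intro: finite_subset)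
          hence "card (I - J) = s - l" using J cardI by (simp add: card_Diff_subset)
          thus ?thesis by simp
        qed
        ultimately show "pf ((s - l) * ?q ^ (d - 1)) (\<lambda>w. (\<Prod>i\<in>J. Bv i) * (\<Prod>i\<in>I - J. X i w))"
          by (simp add: pf_cmult)
      qed
      thus ?thesis unfolding S_def[abs_def] by simp
    qed
    have pE: "pf (f l * ?q ^ d) (\<lambda>w::'a KK. Efun d w ^ f l)"
      using pf_power[OF pf_Efun[of d, where 'a='a], of "f l"] by simp
    have "pf (f l * ?q ^ d + (s - l) * ?q ^ (d - 1)) (\<lambda>w. Efun d w ^ f l * S l w)"
      by (rule pf_mult[OF pE pS])
    moreover have "f l * ?q ^ d + (s - l) * ?q ^ (d - 1) \<le> ?q ^ (d + 1) - 1"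
      unfolding f_def by (rule arith_bound[OF q2 assms(3) _ d1]) (use l in simp)
    ultimately show "pf (?q ^ (d + 1) - 1) (\<lambda>w. Efun d w ^ f l * S l w)" by (rule pf_mono)
  qed
  have pL: "pf (?q ^ (d + 1) - 1) LHS"
    unfolding LHS_def[abs_def] by (rule pf_Nop)
  have "LHS z = (\<Sum>l\<le>s. Efun d z ^ f l * S l z)"
  proof (rule pf_eq[OF pL pR, of "embA ` Aset (d + 1)"])
    show "finite (embA ` Aset (d + 1) :: 'a KK set)" by simp
    show "?q ^ (d + 1) - 1 < card (embA ` Aset (d + 1) :: 'a KK set)"
      unfolding card_embA_Aset using q2 by simp
    fix x :: "'a KK" assume "x \<in> embA ` Aset (d + 1)"
    then obtain a where a: "a \<in> Aset (d + 1)" "x = embA a" by auto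
    have "LHS x = (\<Prod>i\<in>{1..s}. chi (t i) a)" unfolding LHS_def a(2) by (rule Nop_interp[OF a(1)])
    also have "\<dots> = RHS x"
      unfolding RHS_def a(2) using Efun_vanish[OF a(1)] Nop_interp[OF a(1)] by simp
    also have "\<dots> = (\<Sum>l\<le>s. Efun d x ^ f l * S l x)" by (rule R)
    finally show "LHS x = (\<Sum>l\<le>s. Efun d x ^ f l * S l x)" .
  qed
  also have "\<dots> = RHS z" by (rule R[symmetric])
  finally show ?thesis unfolding LHS_def RHS_def .
qed

end
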